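(* Let $\Gamma_1,\Gamma_2$ be propositional theories over a signature $\mathcal L$ (possibly infinite). Then $\Gamma_1$ and $\Gamma_2$ are uniformly equivalent if and only if $C_u(\Gamma_1)=C_u(\Gamma_2)$.
   Context: A propositional signature $\mathcal L$ is a set of atoms. Formulas are built from atoms and $\bot$ using $\wedge,\vee,\to$; $\neg\phi$ abbreviates $\phi\to\bot$ and $\top$ abbreviates $\bot\to\bot$. A theory is a set of formulas. An HT-interpretation over $\mathcal L$ is a pair $(X,Y)$ with $X\subseteq Y\subseteq\mathcal L$; it is total if $X=Y$. $Y\models\phi$ denotes classical satisfaction (atoms in $Y$ true, all others false). HT-satisfaction is defined recursively: $(X,Y)\models a$ iff $a\in X$ for an atom $a$; $(X,Y)\not\models\bot$; $(X,Y)\models\phi\wedge\psi$ iff both conjuncts are satisfied; $(X,Y)\models\phi\vee\psi$ iff one disjunct is satisfied; $(X,Y)\models\phi\to\psi$ iff (i) $(X,Y)\not\models\phi$ or $(X,Y)\models\psi$, and (ii) $Y\models\phi\to\psi$. $(X,Y)\models\Gamma$ iff $(X,Y)$ satisfies every formula of $\Gamma$. An HT-countermodel of $\Gamma$ is an HT-interpretation $(X,Y)$ with $(X,Y)\not\models\Gamma$; $C_s(\Gamma)$ is the set of HT-countermodels of $\Gamma$ (over $\mathcal L$). A total $(Y,Y)$ is an equilibrium model of $\Gamma$ iff $(Y,Y)\models\Gamma$ and $(X,Y)\not\models\Gamma$ for every $X\subsetneq Y$; then $Y$ is an answer set of $\Gamma$. A formula is factual if it is built from atoms and $\bot$ using only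 $\wedge$, $\vee$ and implications of the form $\phi\to\bot$. Theories $\Gamma_1,\Gamma_2$ over $\mathcal L$ are uniformly equivalent iff for every signature $\mathcal L'\supseteq\mathcal L$ and every factual theory $\Gamma$ over $\mathcal L'$, the theories $\Gamma_1\cup\Gamma$ and $\Gamma_2\cup\Gamma$ have the same answer sets. An HT-interpretation $(X,Y)$ is there-closed in a set $S$ of HT-interpretations if $(Y,Y)\notin S$ and $(X',Y)\in S$ for every $X'$ with $X\subseteq X'\subsetneq Y$. $C_u(\Gamma)$ denotes the set of all HT-interpretations over $\mathcal L$ that are there-closed in $C_s(\Gamma)$. *)

theory Defs
  imports Main
begin

datatype 'a form =
    Atom 'a
  | Bot
  | And "'a form" "'a form"
  | Or "'a form" "'a form"
  | Imp "'a form" "'a form"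

definition Neg :: "'a form \<Rightarrow> 'a form" where
  "Neg \<phi> = Imp \<phi> Bot"

definition Top :: "'a form" where
  "Top = Imp Bot Bot"

fun atoms :: "'a form \<Rightarrow> 'a set" where
  "atoms (Atom a) = {a}"
| "atoms Bot = {}"
| "atoms (And \<phi> \<psi>) = atoms \<phi> \<union> atoms \<psi>"
| "atoms (Or \<phi> \<psi>) = atoms \<phi> \<union> atoms \<psi>"
| "atoms (Imp \<phi> \<psi>) = atoms \<phi> \<union> atoms \<psi>"

definition theory_over :: "'a set \<Rightarrow> 'a form set \<Rightarrow> bool" where
  "theory_over L \<Gamma> \<longleftrightarrow> (\<forall>\<phi>\<in>\<Gamma>. atoms \<phi> \<subseteq> L)"

fun csat :: "'a set \<Rightarrow> 'a form \<Rightarrow> bool" where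
  "csat Y (Atom a) = (a \<in> Y)"
| "csat Y Bot = False"
| "csat Y (And \<phi> \<psi>) = (csat Y \<phi> \<and> csat Y \<psi>)"
| "csat Y (Or \<phi> \<psi>) = (csat Y \<phi> \<or> csat Y \<psi>)"
| "csat Y (Imp \<phi> \<psi>) = (csat Y \<phi> \<longrightarrow> csat Y \<psi>)"

fun htsat :: "'a set \<Rightarrow> 'a set \<Rightarrow> 'a form \<Rightarrow> bool" where
  "htsat X Y (Atom a) = (a \<in> X)"
| "htsat X Y Bot = False"
| "htsat X Y (And \<phi> \<psi>) = (htsat X Y \<phi> \<and> htsat X Y \<psi>)"
| "htsat X Y (Or \<phi> \<psi>) = (htsat X Y \<phi> \<or> htsat X Y \<psi>)"
| "htsat X Y (Imp \<phi> \<psi>) =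
     ((\<not> htsat X Y \<phi> \<or> htsat X Y \<psi>) \<and> csat Y (Imp \<phi> \<psi>))"

definition htsat_th :: "'a set \<Rightarrow> 'a set \<Rightarrow> 'a form set \<Rightarrow> bool" where
  "htsat_th X Y \<Gamma> \<longleftrightarrow> (\<forall>\<phi>\<in>\<Gamma>. htsat X Y \<phi>)"

definition ht_interp :: "'a set \<Rightarrow> ('a set \<times> 'a set) set" where
  "ht_interp L = {(X, Y). X \<subseteq> Y \<and> Y \<subseteq> L}"

definition answer_sets :: "'a set \<Rightarrow> 'a form set \<Rightarrow> 'a set set" where
  "answer_sets L \<Gamma> =
     {Y. Y \<subseteq> L \<and> htsat_th Y Y \<Gamma> \<and> (\<forall>X. X \<subset> Y \<longrightarrow> \<not> htsat_th X Y \<Gamma>)}"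

fun factual :: "'a form \<Rightarrow> bool" where
  "factual (Atom a) = True"
| "factual Bot = True"
| "factual (And \<phi> \<psi>) = (factual \<phi> \<and> factual \<psi>)"
| "factual (Or \<phi> \<psi>) = (factual \<phi> \<and> factual \<psi>)"
| "factual (Imp \<phi> Bot) = factual \<phi>"
| "factual (Imp \<phi> \<psi>) = False"

definition uniformly_equivalent :: "'a set \<Rightarrow> 'a form set \<Rightarrow> 'a form set \<Rightarrow> bool" where
  "uniformly_equivalent L \<Gamma>1 \<Gamma>2 \<longleftrightarrow>
     (\<forall>L' \<Gamma>. L \<subseteq> L' \<longrightarrow> theory_over L' \<Gamma> \<longrightarrow> (\<forall>\<phi>\<in>\<Gamma>. factual \<phi>) \<longrightarrow>
        answer_sets L' (\<Gamma>1 \<union> \<Gamma>) = answer_sets L' (\<Gamma>2 \<union> \<Gamma>))"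

definition Cs :: "'a set \<Rightarrow> 'a form set \<Rightarrow> ('a set \<times> 'a set) set" where
  "Cs L \<Gamma> = {(X, Y). (X, Y) \<in> ht_interp L \<and> \<not> htsat_th X Y \<Gamma>}"

definition there_closed :: "('a set \<times> 'a set) set \<Rightarrow> 'a set \<Rightarrow> 'a set \<Rightarrow> bool" where
  "there_closed S X Y \<longleftrightarrow>
     (Y, Y) \<notin> S \<and> (\<forall>X'. X \<subseteq> X' \<and> X' \<subset> Y \<longrightarrow> (X', Y) \<in> S)"

definition Cu :: "'a set \<Rightarrow> 'a form set \<Rightarrow> ('a set \<times> 'a set) set" where
  "Cu L \<Gamma> = {(X, Y). (X, Y) \<in> ht_interp L \<and> there_closed (Cs L \<Gamma>) X Y}"

end

theory Submission
  imports Defs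
begin

lemma local_sat:
  "atoms \<phi> \<subseteq> L \<Longrightarrow> csat Y \<phi> = csat (Y \<inter> L) \<phi> \<and> htsat X Y \<phi> = htsat (X \<inter> L) (Y \<inter> L) \<phi>"
  by (induction \<phi>) auto

lemma local_th:
  assumes "theory_over L \<Gamma>"
  shows "htsat_th X Y \<Gamma> = htsat_th (X \<inter> L) (Y \<inter> L) \<Gamma>"
  using assms local_sat unfolding theory_over_def htsat_th_def by metis

lemma persist: "X \<subseteq> Y \<Longrightarrow> htsat X Y \<phi> \<Longrightarrow> csat Y \<phi>"
  by (induction \<phi>) auto

lemma fact_mono: "factual \<phi> \<Longrightarrow> X \<subseteq> X' \<Longrightarrow> X' \<subseteq> Y \<Longrightarrow> htsat X Y \<phi> \<Longrightarrow> htsat X' Y \<phi>"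
proof (induction \<phi> rule: factual.induct)
  case (5 \<phi>)
  then show ?case using persist[of X' Y \<phi>] by auto
qed auto

lemma char:
  assumes "X \<subseteq> Y" "Y \<subseteq> L"
  shows "(X, Y) \<in> Cu L \<Gamma> \<longleftrightarrow> Y \<in> answer_sets L (\<Gamma> \<union> Atom ` X)"
proof
  assume "(X, Y) \<in> Cu L \<Gamma>"
  hence a: "htsat_th Y Y \<Gamma>" and b: "\<And>X'. X \<subseteq> X' \<Longrightarrow> X' \<subset> Y \<Longrightarrow> \<not> htsat_th X' Y \<Gamma>"
    using assms unfolding Cu_def there_closed_def Cs_def ht_interp_def by auto
  have "\<not> htsat_th X' Y (\<Gamma> \<union> Atom ` X)" if "X' \<subset> Y" for X'
  proof
    assume h: "htsat_th X' Y (\<Gamma> \<union> Atom ` X)"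
    hence "X \<subseteq> X'" unfolding htsat_th_def by (metis UnI2 htsat.simps(1) image_eqI subsetI)
    moreover have "htsat_th X' Y \<Gamma>" using h unfolding htsat_th_def by auto
    ultimately show False using b that by blast
  qed
  moreover have "htsat_th Y Y (\<Gamma> \<union> Atom ` X)" using a assms unfolding htsat_th_def by auto
  ultimately show "Y \<in> answer_sets L (\<Gamma> \<union> Atom ` X)" using assms unfolding answer_sets_def by auto
next
  assume "Y \<in> answer_sets L (\<Gamma> \<union> Atom ` X)"
  hence a: "htsat_th Y Y \<Gamma>" and b: "\<And>X'. X' \<subset> Y \<Longrightarrow> \<not> htsat_th X' Y (\<Gamma> \<union> Atom ` X)"
    unfolding answer_sets_def htsat_th_def by auto
  have c: "\<not> htsat_th X' Y \<Gamma>" if "X \<subseteq> X'" "X' \<subset> Y" for X'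
  proof
    assume "htsat_th X' Y \<Gamma>"
    hence "htsat_th X' Y (\<Gamma> \<union> Atom ` X)" using that unfolding htsat_th_def by auto
    thus False using b that by blast
  qed
  show "(X, Y) \<in> Cu L \<Gamma>"
    using assms a c unfolding Cu_def there_closed_def Cs_def ht_interp_def by auto
qed

lemma dirB:
  assumes t1: "theory_over L \<Gamma>1" and t2: "theory_over L \<Gamma>2"
    and eq: "Cu L \<Gamma>1 = Cu L \<Gamma>2"
    and fac: "\<forall>\<phi>\<in>\<Gamma>. factual \<phi>"
    and Y: "Y \<in> answer_sets L' (\<Gamma>1 \<union> \<Gamma>)"
  shows "Y \<in> answer_sets L' (\<Gamma>2 \<union> \<Gamma>)"
proof -
  define Y0 where "Y0 = Y \<inter> L"
  have YL': "Y \<subseteq> L'" and m1: "htsat_th Y Y \<Gamma>1" and mG: "htsat_th Y Y \<Gamma>"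
    and min: "\<And>X. X \<subset> Y \<Longrightarrow> \<not> htsat_th X Y (\<Gamma>1 \<union> \<Gamma>)"
    using Y unfolding answer_sets_def htsat_th_def by auto
  have m10: "htsat_th Y0 Y0 \<Gamma>1" using m1 local_th[OF t1] Y0_def by metis
  have "(Y0, Y0) \<in> Cu L \<Gamma>1"
    using m10 unfolding Cu_def Cs_def ht_interp_def there_closed_def Y0_def by auto
  hence "(Y0, Y0) \<in> Cu L \<Gamma>2" using eq by simp
  hence m20: "htsat_th Y0 Y0 \<Gamma>2"
    unfolding Cu_def Cs_def ht_interp_def there_closed_def Y0_def by auto
  have m2: "htsat_th Y Y \<Gamma>2" using m20 local_th[OF t2] Y0_def by metis
  have "\<not> htsat_th X Y (\<Gamma>2 \<union> \<Gamma>)" if XY: "X \<subset> Y" for X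
  proof
    assume h: "htsat_th X Y (\<Gamma>2 \<union> \<Gamma>)"
    hence h2: "htsat_th X Y \<Gamma>2" and hG: "htsat_th X Y \<Gamma>" unfolding htsat_th_def by auto
    define X0 where "X0 = X \<inter> L"
    have X0Y0: "X0 \<subseteq> Y0" using XY X0_def Y0_def by auto
    show False
    proof (cases "X0 = Y0")
      case True
      have "htsat_th X Y \<Gamma>1" using m1 local_th[OF t1, of X Y] local_th[OF t1, of Y Y] True X0_def Y0_def by simp
      thus False using min[OF XY] hG unfolding htsat_th_def by auto
    next
      case False
      have "(X0, Y0) \<in> Cu L \<Gamma>1"
        unfolding Cu_def mem_Collect_eq case_prod_conv
      proof (intro conjI)
        show "(X0, Y0) \<in> ht_interp L" using X0Y0 Y0_def ht_interp_def by auto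
        show "there_closed (Cs L \<Gamma>1) X0 Y0"
          unfolding there_closed_def
        proof (intro conjI allI impI)
          show "(Y0, Y0) \<notin> Cs L \<Gamma>1" using m10 unfolding Cs_def by auto
          fix X' assume a: "X0 \<subseteq> X' \<and> X' \<subset> Y0"
          define X'' where "X'' = X' \<union> X"
          have "X'' \<subseteq> Y" using a XY Y0_def X''_def by auto
          moreover have X''L: "X'' \<inter> L = X'" using a X0_def Y0_def X''_def by auto
          ultimately have "X'' \<subset> Y" using a Y0_def by auto
          moreover have "htsat_th X'' Y \<Gamma>"
            using hG fac fact_mono[of _ X X'' Y] \<open>X'' \<subseteq> Y\<close> X''_def unfolding htsat_th_def by blast
          ultimately have "\<not> htsat_th X'' Y \<Gamma>1" using min unfolding htsat_th_def by blast
          hence "\<not> htsat_th X' Y0 \<Gamma>1" using local_th[OF t1, of X'' Y] X''L Y0_def by simp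
          thus "(X', Y0) \<in> Cs L \<Gamma>1" using a Y0_def unfolding Cs_def ht_interp_def by auto
        qed
      qed
      hence "(X0, Y0) \<in> Cu L \<Gamma>2" using eq by simp
      hence "(X0, Y0) \<in> Cs L \<Gamma>2" using False X0Y0
        unfolding Cu_def there_closed_def by auto
      hence "\<not> htsat_th X0 Y0 \<Gamma>2" unfolding Cs_def by auto
      thus False using h2 local_th[OF t2, of X Y] X0_def Y0_def by simp
    qed
  qed
  thus ?thesis using YL' m2 mG unfolding answer_sets_def htsat_th_def by auto
qed

theorem mainTheorem1:
  fixes L :: "'a set" and \<Gamma>1 \<Gamma>2 :: "'a form set"
  assumes "theory_over L \<Gamma>1" and "theory_over L \<Gamma>2"
  shows "uniformly_equivalent L \<Gamma>1 \<Gamma>2 \<longleftrightarrow> Cu L \<Gamma>1 = Cu L \<Gamma>2"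
proof
  assume u: "uniformly_equivalent L \<Gamma>1 \<Gamma>2"
  have "(X, Y) \<in> Cu L \<Gamma>1 \<longleftrightarrow> (X, Y) \<in> Cu L \<Gamma>2" for X Y
  proof (cases "X \<subseteq> Y \<and> Y \<subseteq> L")
    case True
    have "theory_over L (Atom ` X)" using True unfolding theory_over_def by auto
    moreover have "\<forall>\<phi>\<in>Atom ` X. factual \<phi>" by auto
    ultimately have "answer_sets L (\<Gamma>1 \<union> Atom ` X) = answer_sets L (\<Gamma>2 \<union> Atom ` X)"
      using u unfolding uniformly_equivalent_def by blast
    then show ?thesis using char True by metis
  next
    case False
    then show ?thesis unfolding Cu_def ht_interp_def by auto
  qed
  thus "Cu L \<Gamma>1 = Cu L \<Gamma>2" by auto
next
  assume eq: "Cu L \<Gamma>1 = Cu L \<Gamma>2"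
  show "uniformly_equivalent L \<Gamma>1 \<Gamma>2"
    unfolding uniformly_equivalent_def
    using dirB[OF assms eq] dirB[OF assms(2,1) eq[symmetric]] by blast
qed

end
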